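(* Let $\gamma,\lambda\in\mathbb{C}$ be generic and consider the six equations on cube vertex values $(u_0,u_1,u_2,u_{12},v_0,v_1,v_2,v_{12})$: \[ \mathcal A:\ \frac{u_{12}}{u_0}-\frac{(\gamma u_2-1)(\gamma-u_1)}{(\gamma-u_2)(\gamma u_1-1)}=0,\qquad \mathcal S:\ (1-\gamma u_1)(\lambda+\gamma v_2)-(\gamma-u_1)(\gamma-v_{12})u_0v_2=0, \] \[ \mathcal B:\ (\lambda+\gamma v_2-u_0v_2)(1-\gamma u_0+u_0v_0)+(1-\gamma^2-\lambda)u_0v_0=0, \] \[ \mathcal B':\ (\lambda+\gamma v_{12}-u_1v_{12})(1-\gamma u_1+u_1v_1)+(1-\gamma^2-\lambda)u_1v_1=0, \] \[ \mathcal C:\ (1-\gamma u_0)(\lambda+\gamma v_0)-(\gamma-u_0)(\gamma-v_1)u_1v_0=0,\qquad \mathcal C':\ (1-\gamma u_2)(\lambda+\gamma v_2)-(\gamma-u_2)(\gamma-v_{12})u_{12}v_2=0. \] For generic $u_0,u_1,u_2,v_0$, solve $\mathcal A=0$ for $u_{12}$, $\mathcal B=0$ for $v_2$, $\mathcal C=0$ for $v_1$. Then the three expressions for $v_{12}$ obtained from $\mathcal S=0$, $\mathcal B'=0$, $\mathcal C'=0$ coincide as rational functions of $u_0,u_1,u_2,v_0$, and the tetrahedron equations \[ \mathcal K_1:\ \big(\lambda-\gamma\lambda u_0+(1-\gamma^2)u_0v_0\big)\big(1-\gamma^2+\gamma v_{12}-u_1v_{12}\big)+(1-\gamma^2-\lambda)(\gamma-u_0)(1-\gamma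 u_1)v_0=0, \] \[ \mathcal K_2:\ (\lambda+\gamma v_2-u_0v_2)(1-\gamma u_1+u_1v_1)+(1-\gamma^2-\lambda)u_0v_2=0 \] hold identically.
   Context: The lattice sine-Gordon equation is $\frac{u_{l+1,m+1}}{u_{l,m}}=\frac{(\gamma u_{l,m+1}-1)(\gamma-u_{l+1,m})}{(\gamma-u_{l,m+1})(\gamma u_{l+1,m}-1)}$. In the cube, $u_0=u_{l,m}$, $u_1=u_{l+1,m}$, $u_2=u_{l,m+1}$, $u_{12}=u_{l+1,m+1}$, and $v_0,v_1,v_2,v_{12}$ are correspondingly placed values of an auxiliary function $v$. Generic means all denominators appearing are nonzero. *)

theory Defs
  imports Complex_Main
begin

definition eqA :: "complex \<Rightarrow> complex \<Rightarrow> complex \<Rightarrow> complex \<Rightarrow> complex \<Rightarrow> complex" where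
  "eqA g u0 u1 u2 u12 = u12 / u0 - ((g*u2 - 1)*(g - u1)) / ((g - u2)*(g*u1 - 1))"

definition eqS :: "complex \<Rightarrow> complex \<Rightarrow> complex \<Rightarrow> complex \<Rightarrow> complex \<Rightarrow> complex \<Rightarrow> complex" where
  "eqS g lam u0 u1 v2 v12 = (1 - g*u1)*(lam + g*v2) - (g - u1)*(g - v12)*u0*v2"

definition eqB :: "complex \<Rightarrow> complex \<Rightarrow> complex \<Rightarrow> complex \<Rightarrow> complex \<Rightarrow> complex" where
  "eqB g lam u0 v0 v2 = (lam + g*v2 - u0*v2)*(1 - g*u0 + u0*v0) + (1 - g^2 - lam)*u0*v0"

definition eqB' :: "complex \<Rightarrow> complex \<Rightarrow> complex \<Rightarrow> complex \<Rightarrow> complex \<Rightarrow> complex" where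
  "eqB' g lam u1 v1 v12 = (lam + g*v12 - u1*v12)*(1 - g*u1 + u1*v1) + (1 - g^2 - lam)*u1*v1"

definition eqC :: "complex \<Rightarrow> complex \<Rightarrow> complex \<Rightarrow> complex \<Rightarrow> complex \<Rightarrow> complex \<Rightarrow> complex" where
  "eqC g lam u0 u1 v0 v1 = (1 - g*u0)*(lam + g*v0) - (g - u0)*(g - v1)*u1*v0"

definition eqC' :: "complex \<Rightarrow> complex \<Rightarrow> complex \<Rightarrow> complex \<Rightarrow> complex \<Rightarrow> complex \<Rightarrow> complex" where
  "eqC' g lam u2 u12 v2 v12 = (1 - g*u2)*(lam + g*v2) - (g - u2)*(g - v12)*u12*v2"

definition eqK1 :: "complex \<Rightarrow> complex \<Rightarrow> complex \<Rightarrow> complex \<Rightarrow> complex \<Rightarrow> complex \<Rightarrow> complex" where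
  "eqK1 g lam u0 u1 v0 v12 =
     (lam - g*lam*u0 + (1 - g^2)*u0*v0)*(1 - g^2 + g*v12 - u1*v12)
     + (1 - g^2 - lam)*(g - u0)*(1 - g*u1)*v0"

definition eqK2 :: "complex \<Rightarrow> complex \<Rightarrow> complex \<Rightarrow> complex \<Rightarrow> complex \<Rightarrow> complex \<Rightarrow> complex" where
  "eqK2 g lam u0 u1 v1 v2 = (lam + g*v2 - u0*v2)*(1 - g*u1 + u1*v1) + (1 - g^2 - lam)*u0*v2"

end

theory Submission
  imports Defs
begin

lemma lin_iff: "(b::complex) \<noteq> 0 \<Longrightarrow> (a + b*x = 0) \<longleftrightarrow> x = -a/b"
  by (auto simp: field_simps add_eq_0_iff2)

lemma lin_uniq: "(b::complex) \<noteq> 0 \<Longrightarrow> \<exists>!x. a + b*x = 0"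
  using lin_iff by auto

lemma lin_eq: "(b::complex) \<noteq> 0 \<Longrightarrow> d \<noteq> 0 \<Longrightarrow> a*d = c*b \<Longrightarrow> -a/b = -c/d"
  by (simp add: field_simps)

theorem mainTheorem10:
  fixes g lam u0 u1 u2 u12 v0 v1 v2 :: complex
  assumes genA: "u0 \<noteq> 0" "(g - u2)*(g*u1 - 1) \<noteq> 0"
    and genB: "(g - u0)*(1 - g*u0 + u0*v0) \<noteq> 0"
    and genC: "(g - u0)*u1*v0 \<noteq> 0"
    and genS: "(g - u1)*u0*v2 \<noteq> 0"
    and genB': "(g - u1)*(1 - g*u1 + u1*v1) \<noteq> 0"
    and genC': "(g - u2)*u12*v2 \<noteq> 0"
    and A: "eqA g u0 u1 u2 u12 = 0"
    and B: "eqB g lam u0 v0 v2 = 0"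
    and C: "eqC g lam u0 u1 v0 v1 = 0"
  shows "(\<exists>!v12. eqS g lam u0 u1 v2 v12 = 0)
    \<and> (\<exists>!v12. eqB' g lam u1 v1 v12 = 0)
    \<and> (\<exists>!v12. eqC' g lam u2 u12 v2 v12 = 0)
    \<and> (\<forall>v12. eqS g lam u0 u1 v2 v12 = 0 \<longleftrightarrow> eqB' g lam u1 v1 v12 = 0)
    \<and> (\<forall>v12. eqS g lam u0 u1 v2 v12 = 0 \<longleftrightarrow> eqC' g lam u2 u12 v2 v12 = 0)
    \<and> (\<forall>v12. eqS g lam u0 u1 v2 v12 = 0 \<longrightarrow> eqK1 g lam u0 u1 v0 v12 = 0)
    \<and> eqK2 g lam u0 u1 v1 v2 = 0"
proof -
  have hA: "u12*((g - u2)*(g*u1 - 1)) = u0*((g*u2 - 1)*(g - u1))"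
    using A genA unfolding eqA_def by (simp add: field_simps)
  have hB: "(g-u0)*(1 - g*u0 + u0*v0)*v2 = -(lam*(1 - g*u0 + u0*v0) + (1-g^2-lam)*u0*v0)"
    using B unfolding eqB_def by algebra
  have hC: "(g-u0)*u1*v0*v1 = g*(g-u0)*u1*v0 - (1-g*u0)*(lam+g*v0)"
    using C unfolding eqC_def by algebra
  define aS where "aS = (1 - g*u1)*(lam + g*v2) - g*(g-u1)*u0*v2"
  define bS where "bS = (g - u1)*u0*v2"
  define aB where "aB = lam*(1 - g*u1 + u1*v1) + (1-g^2-lam)*u1*v1"
  define bB where "bB = (g - u1)*(1 - g*u1 + u1*v1)"
  define aC where "aC = (1 - g*u2)*(lam + g*v2) - g*(g-u2)*u12*v2"
  define bC where "bC = (g - u2)*u12*v2"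
  have eS: "\<And>x. eqS g lam u0 u1 v2 x = aS + bS*x" unfolding eqS_def aS_def bS_def by algebra
  have eB: "\<And>x. eqB' g lam u1 v1 x = aB + bB*x" unfolding eqB'_def aB_def bB_def by algebra
  have eC: "\<And>x. eqC' g lam u2 u12 v2 x = aC + bC*x" unfolding eqC'_def aC_def bC_def by algebra
  have nS: "bS \<noteq> 0" using genS bS_def by simp
  have nB: "bB \<noteq> 0" using genB' bB_def by simp
  have nC: "bC \<noteq> 0" using genC' bC_def by simp
  have D2: "(g-u0)*(1 - g*u0 + u0*v0) \<noteq> 0" using genB by simp
  have DC: "(g-u0)*u1*v0 \<noteq> 0" using genC by simp
  have DA: "(g - u2)*(g*u1 - 1) \<noteq> 0" using genA by simp
  have p1: "((g-u0)*(1 - g*u0 + u0*v0))*((g-u0)*u1*v0) * (aS*bB - aB*bS) = 0"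
    unfolding aS_def bB_def aB_def bS_def using hB hC by algebra
  have SB: "aS*bB = aB*bS" using p1 D2 DC by simp
  have p2: "((g-u0)*(1 - g*u0 + u0*v0))^2*((g - u2)*(g*u1 - 1)) * (aS*bC - aC*bS) = 0"
    unfolding aS_def bC_def aC_def bS_def using hB hA by algebra
  have SC: "aS*bC = aC*bS" using p2 D2 DA by simp
  have K2: "eqK2 g lam u0 u1 v1 v2 = 0"
  proof -
    have "(g-u0)*(1 - g*u0 + u0*v0)*((g-u0)*u1*v0) * eqK2 g lam u0 u1 v1 v2 = 0"
      unfolding eqK2_def using hB hC by algebra
    thus ?thesis using D2 DC by simp
  qed
  have K1: "eqK1 g lam u0 u1 v0 (-aS/bS) = 0"
  proof -
    have "eqK1 g lam u0 u1 v0 (-aS/bS) * bS =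
      (lam - g*lam*u0 + (1 - g^2)*u0*v0)*((1 - g^2)*bS - (g-u1)*aS)
       + (1 - g^2 - lam)*(g - u0)*(1 - g*u1)*v0*bS"
      unfolding eqK1_def using nS by (simp add: field_simps)
    also have "\<dots> = 0"
    proof -
      have "(g-u0)*(1 - g*u0 + u0*v0) * ((lam - g*lam*u0 + (1 - g^2)*u0*v0)*((1 - g^2)*bS - (g-u1)*aS)
       + (1 - g^2 - lam)*(g - u0)*(1 - g*u1)*v0*bS) = 0"
        unfolding aS_def bS_def using hB by algebra
      thus ?thesis using D2 by simp
    qed
    finally show ?thesis using nS by simp
  qed
  show ?thesis
    unfolding eS eB eC
    using lin_uniq[OF nS] lin_uniq[OF nB] lin_uniq[OF nC]
      lin_iff[OF nS] lin_iff[OF nB] lin_iff[OF nC]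
      lin_eq[OF nS nB SB] lin_eq[OF nS nC SC] K1 K2
    by simp
qed

end
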